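(* Let $\beta>0$, $m\ge1$, and let $j\ne k$ and $s$ be positive integers with $\max\{jm,km\}\le s$. Fix any values of $f_2,\dots,f_s$ (so $H_s$ is fixed), let $e_1$ be a half-edge at $w_j$ in $H_s$ and $e_2$ a half-edge at $w_k$ in $H_s$, and for $t\ge s$ let $A_t$ be the block of $\Pi_{j,s}(t)$ containing $e_1$ and $B_t$ the block of $\Pi_{k,s}(t)$ containing $e_2$ (so neither is a base block). Then for all $t\ge s$, \[ \mathbb{E}[|A_t||B_t|]\le\mathbb{E}[|A_t|]\,\mathbb{E}[|B_t|]\le (t/s)^{2/(2+\beta)}\left(1+O(1/s)\right), \] where expectations are over $f_{s+1},\dots,f_t$ and the implied constant depends only on $\beta$.
   Context: Fix a real $\beta>0$ and a positive integer $m$. The random tree process $(G^n_{1,\beta})_{n\ge1}$ is defined as follows. $G^1_{1,\beta}$ consists of a single vertex $v_1$ and no edges. Given $G^n_{1,\beta}$ with vertices $v_1,\dots,v_n$ and directed edges $e_2,\dots,e_n$ (where $e_i$ is the edge whose tail is $v_i$), $G^{n+1}_{1,\beta}$ is obtained by adding a vertex $v_{n+1}$ and a directed edge $e_{n+1}$ with tail $v_{n+1}$ and head a "target vertex" determined by a random variable $f_{n+1}$, independent of $f_2,\dots,f_n$, taking values in $\Omega_{n+1}=\{(i,v):1\le i\le n\}\cup\{(i,h),(i,t):2\le i\le n\}$ with $\Pr(f_{n+1}=(i,v))=\beta/((2+\beta)n-2)$ and $\Pr(f_{n+1}=(i,h))=\Pr(f_{n+1}=(i,t))=1/((2+\beta)n-2)$.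 If $f_{n+1}=(i,v)$ the target is $v_i$ (chosen "uniformly"); if $f_{n+1}=(i,h)$ the target is the head of $e_i$, and if $f_{n+1}=(i,t)$ the target is the tail $v_i$ of $e_i$ (chosen "preferentially", by copying the head half-edge, resp. tail half-edge, of $e_i$). Consequently the target is $v_i$ with probability $(d_n(v_i)+\beta)/((2+\beta)n-2)$, where $d_n(v)$ is the degree of $v$ in $G^n_{1,\beta}$. Each edge is regarded as two half-edges, one at each endpoint; the degree of a vertex is the number of half-edges at it (loops count twice). For $t\ge1$, $H_t$ is the undirected multigraph formed from $G^t_{1,\beta}$ by identifying, for each $j<\lceil t/m\rceil$, the vertices $v_{(j-1)m+1},\dots,v_{jm}$ into one vertex $w_j$, and identifying the remaining vertices into one vertex $w_{\lceil t/m\rceil}$ (all edges kept). For a vertex $w_k$ of $H_s$ with $km\le s$ and $t\ge s$, the partition $\Pi_{k,s}(t)$ of the half-edges at $w_k$ in $H_t$ is defined inductively: $\Pi_{k,s}(s)$ consists of a singleton block for each of the $d_s(w_k)$ half-edges at $w_k$ in $H_s$ together with one additional, initially empty, "base block". For $t>s$: if the target of the edge $e_t$ added at time $t$ does not lie in $w_k$, then $\Pi_{k,s}(t)=\Pi_{k,s}(t-1)$; if it does, and it was chosen preferentially by copying a half-edge lying in a block $A$ of $\Pi_{k,s}(t-1)$, then the head half-edge of $e_t$ is added to $A$; if it was chosen uniformly, the head half-edge of $e_t$ is added to the base block. *)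

theory Defs
  imports "HOL-Probability.Probability"
begin

text \<open>Kinds of choices for the random variable f_n:
  (i,U) = uniform choice of v_i, (i,Hd) = copy head half-edge of e_i,
  (i,Tl) = copy tail half-edge of e_i.\<close>
datatype kind = U | Hd | Tl

text \<open>Sides of an edge: a half-edge is a pair (i, side) with 2 <= i, denoting
  the head resp. tail half-edge of the edge e_i.\<close>
datatype side = HeadS | TailS

definition omega :: "nat \<Rightarrow> (nat \<times> kind) set" where
  "omega n = {(i, U) | i. 1 \<le> i \<and> i < n} \<union> {(i, Hd) | i. 2 \<le> i \<and> i < n}
             \<union> {(i, Tl) | i. 2 \<le> i \<and> i < n}"

definition fweight :: "real \<Rightarrow> nat \<Rightarrow> nat \<times> kind \<Rightarrow> real" where
  "fweight \<beta> n x = (if x \<in> omega n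
      then (if snd x = U then \<beta> else 1) / ((2 + \<beta>) * real (n - 1) - 2) else 0)"

definition fdist :: "real \<Rightarrow> nat \<Rightarrow> (nat \<times> kind) pmf" where
  "fdist \<beta> n = embed_pmf (fweight \<beta> n)"

text \<open>Target vertex (index) of the edge e_n, i.e. the head of e_n, determined by f.\<close>
function tgt :: "(nat \<Rightarrow> nat \<times> kind) \<Rightarrow> nat \<Rightarrow> nat" where
  "tgt f n = (case f n of (i, Hd) \<Rightarrow> (if i < n then tgt f i else 0) | (i, _) \<Rightarrow> i)"
  by pat_completeness auto
termination
  by (relation "Wellfounded.measure snd") (auto split: prod.splits kind.splits)

declare tgt.simps [simp del]

fun hvert :: "(nat \<Rightarrow> nat \<times> kind) \<Rightarrow> nat \<times> side \<Rightarrow> nat" where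
  "hvert f (i, TailS) = i"
| "hvert f (i, HeadS) = tgt f i"

text \<open>v_i is one of the vertices identified into w_k (for k with k*m <= s <= t this is
  exactly the set of vertices of w_k in H_t).\<close>
definition in_grp :: "nat \<Rightarrow> nat \<Rightarrow> nat \<Rightarrow> bool" where
  "in_grp m k v \<longleftrightarrow> (k - 1) * m < v \<and> v \<le> k * m"

definition halfedges :: "nat \<Rightarrow> (nat \<times> side) set" where
  "halfedges t = {h. 2 \<le> fst h \<and> fst h \<le> t}"

definition halfedges_at :: "nat \<Rightarrow> nat \<Rightarrow> (nat \<Rightarrow> nat \<times> kind) \<Rightarrow> nat \<Rightarrow> (nat \<times> side) set" where
  "halfedges_at m k f t = {h \<in> halfedges t. in_grp m k (hvert f h)}"

text \<open>inblk f s e h: the half-edge h belongs to the block of Pi_{.,s}(.) containing the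
  half-edge e (e present at time s). For half-edges present at time s the blocks are
  singletons; a head half-edge of e_n (n > s) joins the block of the half-edge it copied
  (if chosen preferentially); uniformly chosen heads go to the base block; tail half-edges
  of new edges do not lie in w_k.\<close>
function inblk :: "(nat \<Rightarrow> nat \<times> kind) \<Rightarrow> nat \<Rightarrow> nat \<times> side \<Rightarrow> nat \<times> side \<Rightarrow> bool" where
  "inblk f s e h = (if fst h \<le> s then h = e else
     (case h of (n, TailS) \<Rightarrow> False
      | (n, HeadS) \<Rightarrow> (case f n of (i, U) \<Rightarrow> False
                     | (i, Hd) \<Rightarrow> (if i < n then inblk f s e (i, HeadS) else False)
                     | (i, Tl) \<Rightarrow> (if i < n then inblk f s e (i, TailS) else False))))"
  by pat_completeness auto
termination
  by (relation "Wellfounded.measure (\<lambda>(f, s, e, h). fst h)") (auto split: prod.splits kind.splits)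

declare inblk.simps [simp del]

definition blk :: "nat \<Rightarrow> nat \<Rightarrow> nat \<Rightarrow> (nat \<Rightarrow> nat \<times> kind) \<Rightarrow> nat \<Rightarrow> nat \<times> side \<Rightarrow> (nat \<times> side) set" where
  "blk m k s f t e = {h \<in> halfedges_at m k f t. inblk f s e h}"

definition merge_seq :: "nat \<Rightarrow> (nat \<Rightarrow> nat \<times> kind) \<Rightarrow> (nat \<Rightarrow> nat \<times> kind) \<Rightarrow> nat \<Rightarrow> nat \<times> kind" where
  "merge_seq s f0 g n = (if n \<le> s then f0 n else g n)"

definition future :: "real \<Rightarrow> nat \<Rightarrow> nat \<Rightarrow> (nat \<Rightarrow> nat \<times> kind) pmf" where
  "future \<beta> s t = Pi_pmf {s<..t} (0, U) (fdist \<beta>)"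

lemma pmf_fdist:
  assumes "\<beta> > 0" "n \<ge> 2"
  shows "pmf (fdist \<beta> n) x = fweight \<beta> n x"
  unfolding fdist_def
proof (rule pmf_embed_pmf)
  have den: "(2 + \<beta>) * real (n - 1) - 2 > 0"
  proof -
    have "real (n - 1) \<ge> 1" using assms by simp
    hence "(2 + \<beta>) * real (n - 1) \<ge> (2 + \<beta>) * 1" using assms
      by (intro mult_left_mono) auto
    hence "(2 + \<beta>) * real (n - 1) \<ge> 2 + \<beta>" by simp
    thus ?thesis using assms by linarith
  qed
  show "\<And>x. 0 \<le> fweight \<beta> n x" using den assms by (auto simp: fweight_def)
  have fin: "finite (omega n)" unfolding omega_def
  proof -
    have "{(i, U) | i. 1 \<le> i \<and> i < n} = (\<lambda>i. (i,U)) ` {1..<n}" by auto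
    moreover have "{(i, Hd) | i. 2 \<le> i \<and> i < n} = (\<lambda>i. (i,Hd)) ` {2..<n}" by auto
    moreover have "{(i, Tl) | i. 2 \<le> i \<and> i < n} = (\<lambda>i. (i,Tl)) ` {2..<n}" by auto
    ultimately show "finite ({(i, U) | i. 1 \<le> i \<and> i < n} \<union> {(i, Hd) | i. 2 \<le> i \<and> i < n}
             \<union> {(i, Tl) | i. 2 \<le> i \<and> i < n})" by simp
  qed
  define D where "D = (2 + \<beta>) * real (n - 1) - 2"
  have D: "D > 0" using den unfolding D_def by linarith
  have "(\<integral>\<^sup>+ x. ennreal (fweight \<beta> n x) \<partial>count_space UNIV)
        = (\<Sum>x\<in>omega n. ennreal (fweight \<beta> n x))"
    by (rule nn_integral_count_space'[OF fin]) (auto simp: fweight_def)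
  also have "\<dots> = ennreal (\<Sum>x\<in>omega n. fweight \<beta> n x)"
    using den assms by (intro sum_ennreal) (auto simp: fweight_def)
  also have "(\<Sum>x\<in>omega n. fweight \<beta> n x) = 1"
  proof -
    have om: "omega n = ((\<lambda>i. (i,U)) ` {1..<n} \<union> (\<lambda>i. (i,Hd)) ` {2..<n}) \<union> (\<lambda>i. (i,Tl)) ` {2..<n}"
      unfolding omega_def by auto
    have "(\<Sum>x\<in>omega n. fweight \<beta> n x)
       = (\<Sum>x\<in>(\<lambda>i. (i,U)) ` {1..<n}. fweight \<beta> n x) + (\<Sum>x\<in>(\<lambda>i. (i,Hd)) ` {2..<n}. fweight \<beta> n x)
         + (\<Sum>x\<in>(\<lambda>i. (i,Tl)) ` {2..<n}. fweight \<beta> n x)"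
      unfolding om by (subst sum.union_disjoint, auto)+
    also have "\<dots> = real (n - 1) * (\<beta> / D) + real (n - 2) * (1 / D) + real (n - 2) * (1 / D)"
      by (subst sum.reindex, simp add: inj_on_def)+ (use assms in \<open>simp add: fweight_def omega_def D_def of_nat_diff\<close>)
    also have "\<dots> = (real (n - 1) * \<beta> + 2 * real (n - 2)) / D"
      by (simp add: add_divide_distrib)
    also have "real (n - 1) * \<beta> + 2 * real (n - 2) = D"
      unfolding D_def using assms by (simp add: of_nat_diff algebra_simps)
    also have "D / D = 1" using D by simp
    finally show ?thesis .
  qed
  finally show "(\<integral>\<^sup>+ x. ennreal (fweight \<beta> n x) \<partial>count_space UNIV) = 1" by simp
qed

end

theory Submission
  imports Defs
begin

definition SS :: "(nat \<Rightarrow> nat \<times> kind) \<Rightarrow> nat \<Rightarrow> nat \<Rightarrow> nat \<times> side \<Rightarrow> (nat \<times> side) set" where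
  "SS f s t e = {h. 2 \<le> fst h \<and> fst h \<le> t \<and> inblk f s e h}"

fun phi :: "nat \<times> side \<Rightarrow> nat \<times> kind" where
  "phi (i, HeadS) = (i, Hd)" | "phi (i, TailS) = (i, Tl)"

lemma inj_phi: "inj phi"
proof (rule injI)
  fix x y :: "nat \<times> side"
  assume "phi x = phi y"
  then show "x = y"
    by (cases x; cases y; cases "snd x"; cases "snd y") auto
qed

lemma UNIV_side: "(UNIV::side set) = {HeadS, TailS}"
  using side.exhaust by auto

lemma finite_SS: "finite (SS f s t e)"
proof -
  have "SS f s t e \<subseteq> {0..t} \<times> UNIV" unfolding SS_def by auto
  moreover have "finite ({0..t} \<times> (UNIV::side set))" by (simp add: UNIV_side)
  ultimately show ?thesis by (rule finite_subset)
qed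

lemma tgt_agree:
  assumes "\<And>i. i \<le> n \<Longrightarrow> f i = f' i"
  shows "tgt f n = tgt f' n"
  using assms
proof (induction n rule: less_induct)
  case (less n)
  have fn: "f n = f' n" using less.prems by simp
  obtain i k where ik: "f n = (i,k)" by fastforce
  have IH: "i < n \<Longrightarrow> tgt f i = tgt f' i" using less by (intro less.IH) auto
  have ik': "f' n = (i,k)" using fn ik by simp
  show ?case
    using ik' ik IH by (cases k) (simp_all add: tgt.simps[of f n] tgt.simps[of f' n])
qed

lemma inblk_agree:
  assumes "\<And>i. s < i \<Longrightarrow> i \<le> fst h \<Longrightarrow> f i = f' i"
  shows "inblk f s e h = inblk f' s e h"
  using assms
proof (induction "fst h" arbitrary: h rule: less_induct)
  case less
  obtain n sd where h: "h = (n, sd)" by fastforce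
  show ?case
  proof (cases "n \<le> s")
    case True then show ?thesis unfolding h by (simp add: inblk.simps[of f s e "(n,sd)"] inblk.simps[of f' s e "(n,sd)"])
  next
    case False
    have fn: "f n = f' n" using less.prems False h by simp
    obtain i k where ik: "f n = (i,k)" by fastforce
    have IH: "\<And>sd'. i < n \<Longrightarrow> inblk f s e (i, sd') = inblk f' s e (i, sd')"
      using less h by (intro less.hyps) auto
    have ik': "f' n = (i,k)" using fn ik by simp
    show ?thesis using False ik' ik IH unfolding h inblk.simps[of f s e "(n,sd)"] inblk.simps[of f' s e "(n,sd)"]
      by (cases sd; cases k) simp_all
  qed
qed

lemma inblk_unique:
  assumes "inblk f s e h" "inblk f s e' h"
  shows "e = e'"
  using assms
proof (induction "fst h" arbitrary: h rule: less_induct)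
  case less
  obtain n sd where h: "h = (n, sd)" by fastforce
  show ?case
  proof (cases "n \<le> s")
    case True then show ?thesis using less.prems unfolding h inblk.simps[of f s e "(n,sd)"] inblk.simps[of f s e' "(n,sd)"]
      by (auto split: if_splits)
  next
    case False
    obtain i k where ik: "f n = (i,k)" by fastforce
    have IH: "\<And>sd'. i < n \<Longrightarrow> inblk f s e (i, sd') \<Longrightarrow> inblk f s e' (i, sd') \<Longrightarrow> e = e'"
      using less h by (intro less.hyps) auto
    show ?thesis using False ik IH less.prems unfolding h inblk.simps[of f s e "(n,sd)"] inblk.simps[of f s e' "(n,sd)"]
      by (cases sd; cases k) (auto split: if_splits)
  qed
qed

lemma inblk_hvert:
  assumes "inblk f s e h"
  shows "hvert f h = hvert f e"
  using assms
proof (induction "fst h" arbitrary: h rule: less_induct)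
  case less
  obtain n sd where h: "h = (n, sd)" by fastforce
  show ?case
  proof (cases "n \<le> s")
    case True then show ?thesis using less.prems unfolding h
      by (simp add: inblk.simps[of f s e "(n,sd)"])
  next
    case False
    obtain i k where ik: "f n = (i,k)" by fastforce
    have IH: "\<And>sd'. i < n \<Longrightarrow> inblk f s e (i, sd') \<Longrightarrow> hvert f (i,sd') = hvert f e"
      using less h by (intro less.hyps) auto
    have IH1: "i<n \<Longrightarrow> inblk f s e (i,HeadS) \<Longrightarrow> tgt f i = hvert f e" using IH[of HeadS] by simp
    have IH2: "i<n \<Longrightarrow> inblk f s e (i,TailS) \<Longrightarrow> i = hvert f e" using IH[of TailS] by simp
    show ?thesis using False ik IH1 IH2 less.prems unfolding h inblk.simps[of f s e "(n,sd)"]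
      by (cases sd; cases k) (auto simp add: tgt.simps[of f n] split: if_splits)
  qed
qed

lemma phi_Hd: "(i, Hd) \<in> phi ` A \<longleftrightarrow> (i, HeadS) \<in> A"
proof
  assume "(i, Hd) \<in> phi ` A"
  then obtain x where "x \<in> A" "phi x = (i, Hd)" by auto
  then show "(i, HeadS) \<in> A" by (cases x; cases "snd x") auto
qed force

lemma phi_Tl: "(i, Tl) \<in> phi ` A \<longleftrightarrow> (i, TailS) \<in> A"
proof
  assume "(i, Tl) \<in> phi ` A"
  then obtain x where "x \<in> A" "phi x = (i, Tl)" by auto
  then show "(i, TailS) \<in> A" by (cases x; cases "snd x") auto
qed force

lemma phi_U: "(i, U) \<notin> phi ` A"
proof
  assume "(i, U) \<in> phi ` A"
  then obtain x where "phi x = (i, U)" by auto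
  then show False by (cases x; cases "snd x") auto
qed

lemma blk_SS:
  assumes "e \<in> halfedges_at m j f s" "s \<le> t"
  shows "blk m j s f t e = SS f s t e"
proof -
  have "h \<in> blk m j s f t e" if h: "h \<in> SS f s t e" for h
  proof -
    have "inblk f s e h" using h unfolding SS_def by auto
    then have "hvert f h = hvert f e" by (rule inblk_hvert)
    then show ?thesis using h assms unfolding blk_def halfedges_at_def halfedges_def SS_def by auto
  qed
  then show ?thesis unfolding blk_def halfedges_at_def halfedges_def SS_def by auto
qed

lemma inblk_le: "fst h \<le> s \<Longrightarrow> inblk f s e h \<longleftrightarrow> h = e"
  by (simp add: inblk.simps[of f s e h])

lemma SS_base:
  assumes "2 \<le> fst e" "fst e \<le> s"
  shows "SS f s s e = {e}"
  using assms unfolding SS_def by (auto simp: inblk_le)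

lemma inblk_tail: "s < n \<Longrightarrow> \<not> inblk f s e (n, TailS)"
  by (simp add: inblk.simps[of f s e "(n,TailS)"])

lemma SS_step:
  assumes "s \<le> t" "1 \<le> s"
  shows "card (SS f s (Suc t) e) = card (SS f s t e) + (if inblk f s e (Suc t, HeadS) then 1 else 0)"
proof -
  have eq: "SS f s (Suc t) e = SS f s t e \<union> (if inblk f s e (Suc t, HeadS) then {(Suc t, HeadS)} else {})"
  proof -
    have "h \<in> SS f s t e \<or> h = (Suc t, HeadS)" if "h \<in> SS f s (Suc t) e" for h
    proof -
      obtain n sd where h: "h = (n, sd)" by fastforce
      show ?thesis using that assms inblk_tail[of s "Suc t" f e] unfolding h SS_def
        by (cases sd) (auto simp: le_Suc_eq)
    qed
    then show ?thesis using assms unfolding SS_def by (auto split: if_splits)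
  qed
  have "(Suc t, HeadS) \<notin> SS f s t e" unfolding SS_def by auto
  then show ?thesis unfolding eq using finite_SS[of f s t e] by auto
qed

lemma SS_upd:
  assumes "s \<le> t"
  shows "SS (f(Suc t := y)) s t e = SS f s t e"
proof -
  have "inblk (f(Suc t := y)) s e h = inblk f s e h" if "fst h \<le> t" for h
    using that by (intro inblk_agree) auto
  then show ?thesis unfolding SS_def by auto
qed

lemma new_iff:
  assumes "s \<le> t" "y \<in> omega (Suc t)"
  shows "inblk (f(Suc t := y)) s e (Suc t, HeadS) \<longleftrightarrow> y \<in> phi ` SS f s t e"
proof -
  obtain i k where y: "y = (i, k)" by fastforce
  have ag: "inblk (f(Suc t := y)) s e (i, sd) = inblk f s e (i, sd)" if "i \<le> t" for sd
    using that by (intro inblk_agree) auto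
  show ?thesis
  proof (cases k)
    case U then show ?thesis using assms unfolding y
      by (simp add: inblk.simps[of _ s e "(Suc t, HeadS)"] phi_U)
  next
    case Hd
    have i: "2 \<le> i" "i \<le> t" using assms(2) unfolding y Hd omega_def by auto
    then show ?thesis using assms ag[of HeadS] unfolding y Hd
      by (simp add: inblk.simps[of _ s e "(Suc t, HeadS)"] phi_Hd SS_def)
  next
    case Tl
    have i: "2 \<le> i" "i \<le> t" using assms(2) unfolding y Tl omega_def by auto
    then show ?thesis using assms ag[of TailS] unfolding y Tl
      by (simp add: inblk.simps[of _ s e "(Suc t, HeadS)"] phi_Tl SS_def)
  qed
qed


definition Dn :: "real \<Rightarrow> nat \<Rightarrow> real" where
  "Dn \<beta> n = (2 + \<beta>) * real (n - 1) - 2"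

lemma finite_omega: "finite (omega n)"
proof -
  have "omega n \<subseteq> {0..<n} \<times> UNIV" unfolding omega_def by auto
  moreover have "finite (UNIV :: kind set)"
  proof -
    have "(UNIV :: kind set) = {U, Hd, Tl}" using kind.exhaust by auto
    then show ?thesis by (metis finite.emptyI finite_insert)
  qed
  ultimately show ?thesis using finite_subset by blast
qed

lemma set_fdist: "\<beta> > 0 \<Longrightarrow> 2 \<le> n \<Longrightarrow> set_pmf (fdist \<beta> n) \<subseteq> omega n"
  by (auto simp: set_pmf_iff pmf_fdist fweight_def split: if_splits)

lemma sum_w: "\<beta> > 0 \<Longrightarrow> 2 \<le> n \<Longrightarrow> (\<Sum>y\<in>omega n. fweight \<beta> n y) = 1"
  using sum_pmf_eq_1[OF finite_omega set_fdist, of \<beta> n] by (simp add: pmf_fdist)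

lemma Dn_pos: "\<beta> > 0 \<Longrightarrow> 2 \<le> n \<Longrightarrow> Dn \<beta> n > 0"
proof -
  assume a: "\<beta> > 0" "2 \<le> n"
  have "real (n - 1) \<ge> 1" using a by simp
  hence "(2 + \<beta>) * real (n - 1) \<ge> (2 + \<beta>) * 1" using a by (intro mult_left_mono) auto
  hence "(2 + \<beta>) * real (n - 1) \<ge> 2 + \<beta>" by simp
  then show ?thesis using a unfolding Dn_def by linarith
qed

lemma fweight_nonneg: "\<beta> > 0 \<Longrightarrow> 2 \<le> n \<Longrightarrow> 0 \<le> fweight \<beta> n y"
  using Dn_pos[of \<beta> n] by (auto simp: fweight_def Dn_def)

lemma sum_P:
  assumes "P \<subseteq> omega n" "\<And>y. y \<in> P \<Longrightarrow> snd y \<noteq> U"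
  shows "(\<Sum>y\<in>omega n. (if y \<in> P then 1 else 0) * fweight \<beta> n y) = real (card P) / Dn \<beta> n"
proof -
  have "(\<Sum>y\<in>omega n. (if y \<in> P then 1 else 0) * fweight \<beta> n y) = (\<Sum>y\<in>P. fweight \<beta> n y)"
    using assms(1) finite_omega[of n]
    by (simp add: sum.If_cases Int_absorb1 if_distrib[of "\<lambda>x. x * _"] cong: if_cong)
  also have "\<dots> = (\<Sum>y\<in>P. 1 / Dn \<beta> n)"
    using assms by (intro sum.cong) (auto simp: fweight_def Dn_def)
  also have "\<dots> = real (card P) / Dn \<beta> n" by simp
  finally show ?thesis .
qed

lemma inner:
  assumes "\<beta> > 0" "2 \<le> n" "\<And>y. 0 \<le> h y"
  shows "(\<integral>\<^sup>+y. ennreal (h y) \<partial>fdist \<beta> n) = ennreal (\<Sum>y\<in>omega n. h y * fweight \<beta> n y)"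
proof -
  have "(\<integral>\<^sup>+y. ennreal (h y) \<partial>fdist \<beta> n) = (\<Sum>y\<in>omega n. ennreal (h y) * pmf (fdist \<beta> n) y)"
    using set_fdist[OF assms(1,2)] by (intro nn_integral_measure_pmf_support finite_omega) auto
  also have "\<dots> = (\<Sum>y\<in>omega n. ennreal (h y * fweight \<beta> n y))"
    using assms by (intro sum.cong refl) (simp add: pmf_fdist ennreal_mult fweight_nonneg)
  also have "\<dots> = ennreal (\<Sum>y\<in>omega n. h y * fweight \<beta> n y)"
    using assms pmf_fdist[OF assms(1,2)] by (intro sum_ennreal) (metis mult_nonneg_nonneg pmf_nonneg)
  finally show ?thesis .
qed

lemma future_Suc:
  assumes "s \<le> t"
  shows "future \<beta> s (Suc t) = map_pmf (\<lambda>(y,g). g(Suc t := y)) (pair_pmf (fdist \<beta> (Suc t)) (future \<beta> s t))"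
proof -
  have "{s<..Suc t} = insert (Suc t) {s<..t}" using assms by auto
  then show ?thesis unfolding future_def by (simp add: Pi_pmf_insert)
qed

lemma nn_step:
  assumes "s \<le> t"
  shows "(\<integral>\<^sup>+g. H g \<partial>future \<beta> s (Suc t)) =
         (\<integral>\<^sup>+g. (\<integral>\<^sup>+y. H (g(Suc t := y)) \<partial>fdist \<beta> (Suc t)) \<partial>future \<beta> s t)"
  unfolding future_Suc[OF assms]
  by (subst pair_commute_pmf) (simp add: nn_integral_pair_pmf' case_prod_beta)

lemma merge_upd: "s < n \<Longrightarrow> merge_seq s f0 (g(n := y)) = (merge_seq s f0 g)(n := y)"
  by (auto simp: merge_seq_def fun_eq_iff)

lemma phiSS_omega: "phi ` SS f s t e \<subseteq> omega (Suc t)"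
proof
  fix y assume "y \<in> phi ` SS f s t e"
  then obtain h where h: "h \<in> SS f s t e" "y = phi h" by auto
  then show "y \<in> omega (Suc t)" by (cases h; cases "snd h") (auto simp: SS_def omega_def)
qed

lemma phiSS_notU: "y \<in> phi ` A \<Longrightarrow> snd y \<noteq> U"
  by (metis phi_U prod.collapse)


lemma card_phi: "card (phi ` A) = card A"
  by (rule card_image[OF inj_on_subset[OF inj_phi subset_UNIV]])

lemma inner_a:
  assumes "\<beta> > 0" "1 \<le> s" "s \<le> t"
  shows "(\<integral>\<^sup>+y. ennreal (real (card (SS (f(Suc t := y)) s (Suc t) e))) \<partial>fdist \<beta> (Suc t))
        = ennreal (real (card (SS f s t e)) * (1 + 1 / Dn \<beta> (Suc t)))"
proof -
  let ?a = "real (card (SS f s t e))"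
  let ?P = "phi ` SS f s t e"
  let ?w = "fweight \<beta> (Suc t)"
  have n2: "2 \<le> Suc t" using assms by simp
  have eq: "real (card (SS (f(Suc t := y)) s (Suc t) e)) = ?a + (if y \<in> ?P then 1 else 0)"
    if "y \<in> omega (Suc t)" for y
    using SS_step[of s t "f(Suc t := y)" e] SS_upd[of s t f y e] new_iff[of s t y f e] assms that by auto
  have "(\<integral>\<^sup>+y. ennreal (real (card (SS (f(Suc t := y)) s (Suc t) e))) \<partial>fdist \<beta> (Suc t))
     = ennreal (\<Sum>y\<in>omega (Suc t). real (card (SS (f(Suc t := y)) s (Suc t) e)) * ?w y)"
    by (rule inner[OF assms(1) n2]) simp
  also have "(\<Sum>y\<in>omega (Suc t). real (card (SS (f(Suc t := y)) s (Suc t) e)) * ?w y)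
     = (\<Sum>y\<in>omega (Suc t). ?a * ?w y + (if y \<in> ?P then 1 else 0) * ?w y)"
    using eq by (intro sum.cong) (auto simp: algebra_simps)
  also have "\<dots> = ?a * (\<Sum>y\<in>omega (Suc t). ?w y) + (\<Sum>y\<in>omega (Suc t). (if y \<in> ?P then 1 else 0) * ?w y)"
    by (simp add: sum.distrib sum_distrib_left)
  also have "\<dots> = ?a + real (card ?P) / Dn \<beta> (Suc t)"
    using sum_w[OF assms(1) n2] sum_P[OF phiSS_omega[of f s t e] phiSS_notU, where \<beta>=\<beta>] by simp
  also have "?a + real (card ?P) / Dn \<beta> (Suc t) = ?a * (1 + 1 / Dn \<beta> (Suc t))"
    by (simp add: card_phi algebra_simps)
  finally show ?thesis .
qed

lemma inner_ab:
  assumes "\<beta> > 0" "1 \<le> s" "s \<le> t" "SS f s t e1 \<inter> SS f s t e2 = {}"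
  shows "(\<integral>\<^sup>+y. ennreal (real (card (SS (f(Suc t := y)) s (Suc t) e1)) * real (card (SS (f(Suc t := y)) s (Suc t) e2))) \<partial>fdist \<beta> (Suc t))
        = ennreal (real (card (SS f s t e1)) * real (card (SS f s t e2)) * (1 + 2 / Dn \<beta> (Suc t)))"
proof -
  let ?a = "real (card (SS f s t e1))"
  let ?b = "real (card (SS f s t e2))"
  let ?P = "phi ` SS f s t e1"
  let ?Q = "phi ` SS f s t e2"
  let ?w = "fweight \<beta> (Suc t)"
  have n2: "2 \<le> Suc t" using assms by simp
  have PQ: "?P \<inter> ?Q = {}" using assms(4) inj_phi by (simp add: image_Int[symmetric])
  have eq: "real (card (SS (f(Suc t := y)) s (Suc t) e1)) = ?a + (if y \<in> ?P then 1 else 0)"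
    if "y \<in> omega (Suc t)" for y
    using SS_step[of s t "f(Suc t := y)" e1] SS_upd[of s t f y e1] new_iff[of s t y f e1] assms that by auto
  have eq2: "real (card (SS (f(Suc t := y)) s (Suc t) e2)) = ?b + (if y \<in> ?Q then 1 else 0)"
    if "y \<in> omega (Suc t)" for y
    using SS_step[of s t "f(Suc t := y)" e2] SS_upd[of s t f y e2] new_iff[of s t y f e2] assms that by auto
  have "(\<integral>\<^sup>+y. ennreal (real (card (SS (f(Suc t := y)) s (Suc t) e1)) * real (card (SS (f(Suc t := y)) s (Suc t) e2))) \<partial>fdist \<beta> (Suc t))
     = ennreal (\<Sum>y\<in>omega (Suc t). real (card (SS (f(Suc t := y)) s (Suc t) e1)) * real (card (SS (f(Suc t := y)) s (Suc t) e2)) * ?w y)"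
    by (rule inner[OF assms(1) n2]) simp
  also have "(\<Sum>y\<in>omega (Suc t). real (card (SS (f(Suc t := y)) s (Suc t) e1)) * real (card (SS (f(Suc t := y)) s (Suc t) e2)) * ?w y)
     = (\<Sum>y\<in>omega (Suc t). ?a * ?b * ?w y + ?a * ((if y \<in> ?Q then 1 else 0) * ?w y) + ?b * ((if y \<in> ?P then 1 else 0) * ?w y))"
  proof (intro sum.cong refl)
    fix y assume y: "y \<in> omega (Suc t)"
    show "real (card (SS (f(Suc t := y)) s (Suc t) e1)) * real (card (SS (f(Suc t := y)) s (Suc t) e2)) * ?w y
       = ?a * ?b * ?w y + ?a * ((if y \<in> ?Q then 1 else 0) * ?w y) + ?b * ((if y \<in> ?P then 1 else 0) * ?w y)"
      unfolding eq[OF y] eq2[OF y] using PQ by (auto simp: algebra_simps)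
  qed
  also have "\<dots> = ?a * ?b * (\<Sum>y\<in>omega (Suc t). ?w y) + ?a * (\<Sum>y\<in>omega (Suc t). (if y \<in> ?Q then 1 else 0) * ?w y)
      + ?b * (\<Sum>y\<in>omega (Suc t). (if y \<in> ?P then 1 else 0) * ?w y)"
    by (simp add: sum.distrib sum_distrib_left)
  also have "\<dots> = ?a * ?b + ?a * (real (card ?Q) / Dn \<beta> (Suc t)) + ?b * (real (card ?P) / Dn \<beta> (Suc t))"
    using sum_w[OF assms(1) n2] sum_P[OF phiSS_omega[of f s t e1] phiSS_notU, where \<beta>=\<beta>]
      sum_P[OF phiSS_omega[of f s t e2] phiSS_notU, where \<beta>=\<beta>] by simp
  also have "?a * ?b + ?a * (real (card ?Q) / Dn \<beta> (Suc t)) + ?b * (real (card ?P) / Dn \<beta> (Suc t))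
     = ?a * ?b * (1 + 2 / Dn \<beta> (Suc t))"
    by (simp add: card_phi algebra_simps add_divide_distrib)
  finally show ?thesis .
qed

lemma Dn_Suc_pos: "\<beta> > 0 \<Longrightarrow> 1 \<le> t \<Longrightarrow> Dn \<beta> (Suc t) > 0"
  by (rule Dn_pos) auto

lemma E_a:
  assumes "\<beta> > 0" "1 \<le> s" "s \<le> t" "2 \<le> fst e" "fst e \<le> s"
  shows "(\<integral>\<^sup>+g. ennreal (real (card (SS (merge_seq s f0 g) s t e))) \<partial>future \<beta> s t)
       = ennreal (\<Prod>n\<in>{s<..t}. 1 + 1 / Dn \<beta> n)"
  using assms(3)
proof (induction t rule: nat_induct_at_least)
  case base
  show ?case using SS_base[OF assms(4,5)] by simp
next
  case (Suc t)
  have D: "Dn \<beta> (Suc t) > 0" using Suc assms by (intro Dn_Suc_pos) auto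
  have "(\<integral>\<^sup>+g. ennreal (real (card (SS (merge_seq s f0 g) s (Suc t) e))) \<partial>future \<beta> s (Suc t))
      = (\<integral>\<^sup>+g. (\<integral>\<^sup>+y. ennreal (real (card (SS (merge_seq s f0 (g(Suc t := y))) s (Suc t) e))) \<partial>fdist \<beta> (Suc t)) \<partial>future \<beta> s t)"
    by (rule nn_step) (use Suc in simp)
  also have "\<dots> = (\<integral>\<^sup>+g. ennreal (real (card (SS (merge_seq s f0 g) s t e))) * ennreal (1 + 1 / Dn \<beta> (Suc t)) \<partial>future \<beta> s t)"
    using Suc assms D by (intro nn_integral_cong) (simp add: merge_upd inner_a ennreal_mult)
  also have "\<dots> = (\<integral>\<^sup>+g. ennreal (real (card (SS (merge_seq s f0 g) s t e))) \<partial>future \<beta> s t) * ennreal (1 + 1 / Dn \<beta> (Suc t))"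
    by (rule nn_integral_multc) simp
  also have "\<dots> = ennreal ((\<Prod>n\<in>{s<..t}. 1 + 1 / Dn \<beta> n) * (1 + 1 / Dn \<beta> (Suc t)))"
  proof -
    have "0 \<le> 1 + 1 / Dn \<beta> n" if "n \<in> {s<..t}" for n
      using Dn_pos[of \<beta> n] that assms by auto
    then have "0 \<le> (\<Prod>n\<in>{s<..t}. 1 + 1 / Dn \<beta> n)" by (rule prod_nonneg)
    then show ?thesis unfolding Suc.IH using D by (subst ennreal_mult) auto
  qed
  also have "(\<Prod>n\<in>{s<..t}. 1 + 1 / Dn \<beta> n) * (1 + 1 / Dn \<beta> (Suc t)) = (\<Prod>n\<in>{s<..Suc t}. 1 + 1 / Dn \<beta> n)"
  proof -
    have "{s<..Suc t} = insert (Suc t) {s<..t}" using Suc by auto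
    then show ?thesis by (simp add: mult.commute)
  qed
  finally show ?case .
qed


lemma SS_disj: "e1 \<noteq> e2 \<Longrightarrow> SS f s t e1 \<inter> SS f s t e2 = {}"
  unfolding SS_def using inblk_unique by blast

lemma E_ab:
  assumes "\<beta> > 0" "1 \<le> s" "s \<le> t" "2 \<le> fst e1" "fst e1 \<le> s" "2 \<le> fst e2" "fst e2 \<le> s" "e1 \<noteq> e2"
  shows "(\<integral>\<^sup>+g. ennreal (real (card (SS (merge_seq s f0 g) s t e1)) * real (card (SS (merge_seq s f0 g) s t e2))) \<partial>future \<beta> s t)
       = ennreal (\<Prod>n\<in>{s<..t}. 1 + 2 / Dn \<beta> n)"
  using assms(3)
proof (induction t rule: nat_induct_at_least)
  case base
  show ?case using SS_base[OF assms(4,5)] SS_base[OF assms(6,7)] by simp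
next
  case (Suc t)
  have D: "Dn \<beta> (Suc t) > 0" using Suc assms by (intro Dn_Suc_pos) auto
  have "(\<integral>\<^sup>+g. ennreal (real (card (SS (merge_seq s f0 g) s (Suc t) e1)) * real (card (SS (merge_seq s f0 g) s (Suc t) e2))) \<partial>future \<beta> s (Suc t))
      = (\<integral>\<^sup>+g. (\<integral>\<^sup>+y. ennreal (real (card (SS (merge_seq s f0 (g(Suc t := y))) s (Suc t) e1)) * real (card (SS (merge_seq s f0 (g(Suc t := y))) s (Suc t) e2))) \<partial>fdist \<beta> (Suc t)) \<partial>future \<beta> s t)"
    by (rule nn_step) (use Suc in simp)
  also have "\<dots> = (\<integral>\<^sup>+g. ennreal (real (card (SS (merge_seq s f0 g) s t e1)) * real (card (SS (merge_seq s f0 g) s t e2))) * ennreal (1 + 2 / Dn \<beta> (Suc t)) \<partial>future \<beta> s t)"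
  proof (intro nn_integral_cong)
    fix g
    have st: "s < Suc t" using Suc by simp
    have "(\<integral>\<^sup>+y. ennreal (real (card (SS (merge_seq s f0 (g(Suc t := y))) s (Suc t) e1)) * real (card (SS (merge_seq s f0 (g(Suc t := y))) s (Suc t) e2))) \<partial>fdist \<beta> (Suc t))
       = (\<integral>\<^sup>+y. ennreal (real (card (SS ((merge_seq s f0 g)(Suc t := y)) s (Suc t) e1)) * real (card (SS ((merge_seq s f0 g)(Suc t := y)) s (Suc t) e2))) \<partial>fdist \<beta> (Suc t))"
      by (simp only: merge_upd[OF st])
    also have "\<dots> = ennreal (real (card (SS (merge_seq s f0 g) s t e1)) * real (card (SS (merge_seq s f0 g) s t e2)) * (1 + 2 / Dn \<beta> (Suc t)))"
      by (rule inner_ab[OF assms(1,2) Suc.hyps SS_disj[OF assms(8)]])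
    also have "\<dots> = ennreal (real (card (SS (merge_seq s f0 g) s t e1)) * real (card (SS (merge_seq s f0 g) s t e2))) * ennreal (1 + 2 / Dn \<beta> (Suc t))"
      using D by (intro ennreal_mult) auto
    finally show "(\<integral>\<^sup>+y. ennreal (real (card (SS (merge_seq s f0 (g(Suc t := y))) s (Suc t) e1)) * real (card (SS (merge_seq s f0 (g(Suc t := y))) s (Suc t) e2))) \<partial>fdist \<beta> (Suc t))
      = ennreal (real (card (SS (merge_seq s f0 g) s t e1)) * real (card (SS (merge_seq s f0 g) s t e2))) * ennreal (1 + 2 / Dn \<beta> (Suc t))" .
  qed
  also have "\<dots> = (\<integral>\<^sup>+g. ennreal (real (card (SS (merge_seq s f0 g) s t e1)) * real (card (SS (merge_seq s f0 g) s t e2))) \<partial>future \<beta> s t) * ennreal (1 + 2 / Dn \<beta> (Suc t))"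
    by (rule nn_integral_multc) simp
  also have "\<dots> = ennreal ((\<Prod>n\<in>{s<..t}. 1 + 2 / Dn \<beta> n) * (1 + 2 / Dn \<beta> (Suc t)))"
  proof -
    have "0 \<le> 1 + 2 / Dn \<beta> n" if "n \<in> {s<..t}" for n
      using Dn_pos[of \<beta> n] that assms by auto
    then have "0 \<le> (\<Prod>n\<in>{s<..t}. 1 + 2 / Dn \<beta> n)" by (rule prod_nonneg)
    then show ?thesis unfolding Suc.IH using D by (subst ennreal_mult) auto
  qed
  also have "(\<Prod>n\<in>{s<..t}. 1 + 2 / Dn \<beta> n) * (1 + 2 / Dn \<beta> (Suc t)) = (\<Prod>n\<in>{s<..Suc t}. 1 + 2 / Dn \<beta> n)"
  proof -
    have "{s<..Suc t} = insert (Suc t) {s<..t}" using Suc by auto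
    then show ?thesis by (simp add: mult.commute)
  qed
  finally show ?case .
qed

lemma expect_nn:
  fixes M :: "'a pmf"
  assumes "\<And>g. 0 \<le> F g" "(\<integral>\<^sup>+g. ennreal (F g) \<partial>M) = ennreal Q" "0 \<le> Q"
  shows "measure_pmf.expectation M F = Q"
  using assms by (subst integral_eq_nn_integral) auto

lemma hvert_merge: "fst h \<le> s \<Longrightarrow> hvert (merge_seq s f0 g) h = hvert f0 h"
proof -
  assume a: "fst h \<le> s"
  obtain n sd where h: "h = (n, sd)" by fastforce
  have "tgt (merge_seq s f0 g) n = tgt f0 n" using a h by (intro tgt_agree) (auto simp: merge_seq_def)
  then show ?thesis using h by (cases sd) auto
qed

lemma halfedges_at_merge: "halfedges_at m j (merge_seq s f0 g) s = halfedges_at m j f0 s"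
  unfolding halfedges_at_def halfedges_def using hvert_merge by auto

lemma in_grp_unique:
  assumes "in_grp m j v" "in_grp m k v" shows "j = k"
proof (rule ccontr)
  assume "j \<noteq> k"
  then consider "j < k" | "k < j" by linarith
  then show False
  proof cases
    case 1
    then have "j * m \<le> (k - 1) * m" by (intro mult_right_mono) auto
    then show False using assms unfolding in_grp_def by linarith
  next
    case 2
    then have "k * m \<le> (j - 1) * m" by (intro mult_right_mono) auto
    then show False using assms unfolding in_grp_def by linarith
  qed
qed


lemma key_ineq:
  fixes x r :: real assumes "1 < x" "0 \<le> r"
  shows "1 + r / x \<le> (x / (x - 1)) powr r"
proof -
  have "ln ((x-1)/x) \<le> (x-1)/x - 1" by (rule ln_le_minus_one) (use assms in simp)
  also have "(x-1)/x - 1 = - (1/x)" using assms by (simp add: field_simps)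
  finally have l: "1/x \<le> ln (x/(x-1))" using assms by (simp add: ln_div)
  have "1 + r/x \<le> exp (r/x)" using exp_ge_add_one_self[of "r/x"] by simp
  also have "exp (r/x) \<le> exp (r * ln (x/(x-1)))"
  proof -
    have "r * (1/x) \<le> r * ln (x/(x-1))" by (rule mult_left_mono[OF l assms(2)])
    then show ?thesis by simp
  qed
  also have "\<dots> = (x/(x-1)) powr r" using assms by (simp add: powr_def mult.commute)
  finally show ?thesis .
qed

lemma c_bounds: "\<beta> > 0 \<Longrightarrow> 2/(2+\<beta>) < (1::real) \<and> 0 < 2/(2+\<beta>)"
  by (simp add: divide_less_eq)

lemma Q1_bound:
  assumes "\<beta> > 0" "2 \<le> s" "s \<le> t" "c = 2/(2+\<beta>)" "r = 1/(2+\<beta>)"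
  shows "(\<Prod>n\<in>{s<..t}. 1 + 1 / Dn \<beta> n) \<le> ((real t - 1 - c) / (real s - 1 - c)) powr r"
  using assms(3)
proof (induction t rule: nat_induct_at_least)
  case base
  have "c < 1" using assms c_bounds[of \<beta>] by simp
  moreover have "real s \<ge> 2" using assms(2) by simp
  ultimately have "real s - 1 - c > 0" by linarith
  then show ?case by simp
next
  case (Suc t)
  have c1: "c < 1" "0 < c" using assms c_bounds[of \<beta>] by simp_all
  have r0: "0 \<le> r" using assms by simp
  have "real t \<ge> 2" using Suc assms by simp
  then have x: "1 < real t - c" using c1 by linarith
  have s2r: "real s \<ge> 2" using assms(2) by simp
  have sc: "real s - 1 - c > 0" using s2r c1 by linarith
  have e1: "Dn \<beta> (Suc t) = (2 + \<beta>) * (real t - c)"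
    unfolding Dn_def using assms(1,4) by (simp add: field_simps)
  have D: "1 / Dn \<beta> (Suc t) = r / (real t - c)"
    unfolding e1 assms(5) by simp
  have P0: "0 \<le> (\<Prod>n\<in>{s<..t}. 1 + 1 / Dn \<beta> n)"
  proof (rule prod_nonneg)
    fix n assume "n \<in> {s<..t}"
    then show "0 \<le> 1 + 1 / Dn \<beta> n" using Dn_pos[of \<beta> n] assms by auto
  qed
  have "{s<..Suc t} = insert (Suc t) {s<..t}" using Suc by auto
  then have "(\<Prod>n\<in>{s<..Suc t}. 1 + 1 / Dn \<beta> n) = (\<Prod>n\<in>{s<..t}. 1 + 1 / Dn \<beta> n) * (1 + r / (real t - c))"
    using D by (simp add: mult.commute)
  also have "\<dots> \<le> ((real t - 1 - c) / (real s - 1 - c)) powr r * ((real t - c) / (real t - c - 1)) powr r"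
    using Suc.IH key_ineq[OF x r0] P0 r0 x by (intro mult_mono) auto
  also have "\<dots> = ((real t - 1 - c) / (real s - 1 - c) * ((real t - c) / (real t - c - 1))) powr r"
    using x sc by (subst powr_mult) auto
  also have "(real t - 1 - c) / (real s - 1 - c) * ((real t - c) / (real t - c - 1)) = (real (Suc t) - 1 - c) / (real s - 1 - c)"
  proof -
    have y: "real t - c - 1 = real t - 1 - c" "real t - 1 - c \<noteq> 0" "real (Suc t) - 1 - c = real t - c"
      using x by auto
    show ?thesis unfolding y(1,3) using y(2) by simp
  qed
  finally show ?case .
qed

lemma final_bound:
  assumes "\<beta> > 0" "2 \<le> s" "s \<le> t" "0 \<le> Q" "Q \<le> ((real t - 1 - c) / (real s - 1 - c)) powr r"
    "c = 2/(2+\<beta>)" "r = 1/(2+\<beta>)" "C = 2*(1+c)/(1-c)"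
  shows "Q * Q \<le> (real t / real s) powr (2/(2+\<beta>)) * (1 + C / real s)"
proof -
  have c1: "c < 1" "0 < c" using assms c_bounds[of \<beta>] by simp_all
  have r0: "0 \<le> r" "2 * r = c" using assms by simp_all
  have s2r: "real s \<ge> 2" using assms(2) by simp
  have sc: "real s - 1 - c > 0" using s2r c1 by linarith
  let ?B = "(real t - 1 - c) / (real s - 1 - c)"
  have "real t \<ge> real s" using assms(3) by simp
  then have B0: "0 \<le> ?B" using sc by simp
  have "Q * Q \<le> ?B powr r * ?B powr r" using assms by (intro mult_mono) auto
  also have "\<dots> = ?B powr c" using r0 by (simp add: powr_add[symmetric])
  also have "\<dots> \<le> (real t / (real s - 1 - c)) powr c"
    using B0 sc c1 by (intro powr_mono2) (auto simp: divide_right_mono)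
  also have "real t / (real s - 1 - c) = (real t / real s) * (real s / (real s - 1 - c))"
    using assms by (simp add: field_simps)
  also have "(real t / real s * (real s / (real s - 1 - c))) powr c
      = (real t / real s) powr c * (real s / (real s - 1 - c)) powr c"
    using sc by (subst powr_mult) auto
  also have "(real s / (real s - 1 - c)) powr c \<le> (real s / (real s - 1 - c)) powr 1"
    using sc c1 by (intro powr_mono) (auto simp: field_simps)
  also have "(real s / (real s - 1 - c)) powr 1 \<le> 1 + C / real s"
  proof -
    have s2: "real s \<ge> 2" using assms by simp
    have "(1 + c) * real s \<le> C * (real s - 1 - c)"
    proof -
      have h: "2 * (1 + c) \<le> real s * (1 + c)" by (rule mult_right_mono[OF s2]) (use c1 in simp)
      have "(1 - c) * real s \<le> 2 * (real s - 1 - c)" using h by (simp add: algebra_simps)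
      then have "(1 + c) * ((1 - c) * real s) \<le> (1 + c) * (2 * (real s - 1 - c))"
        using c1 by (intro mult_left_mono) auto
      have "(1 + c) * real s = (1 + c) * ((1 - c) * real s) / (1 - c)" using c1 by simp
      also have "\<dots> \<le> (1 + c) * (2 * (real s - 1 - c)) / (1 - c)"
        using \<open>(1 + c) * ((1 - c) * real s) \<le> (1 + c) * (2 * (real s - 1 - c))\<close> c1
        by (intro divide_right_mono) auto
      also have "\<dots> = C * (real s - 1 - c)" using assms(8) by (simp add: algebra_simps)
      finally show ?thesis .
    qed
    then have "real s / (real s - 1 - c) \<le> 1 + C / real s"
      using sc s2 by (simp add: field_simps)
    then show ?thesis using sc s2 by simp
  qed
  finally show ?thesis using r0 assms(6) by (simp add: mult_left_mono)
qed


lemma prodD_nonneg: "\<beta> > 0 \<Longrightarrow> 1 \<le> s \<Longrightarrow> 0 \<le> (\<Prod>n\<in>{s<..t}. 1 + a / Dn \<beta> n)" if "0 \<le> a" for a :: real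
proof -
  assume b: "\<beta> > 0" "1 \<le> s"
  show ?thesis
  proof (rule prod_nonneg)
    fix n assume "n \<in> {s<..t}"
    then show "0 \<le> 1 + a / Dn \<beta> n" using Dn_pos[of \<beta> n] b that by auto
  qed
qed

theorem lemma5:
  fixes \<beta> :: real
  assumes "\<beta> > 0"
  shows "\<exists>C::real. \<forall>(m::nat) (j::nat) (k::nat) (s::nat) (t::nat) f0 e1 e2.
     (m \<ge> 1 \<and> j \<ge> 1 \<and> k \<ge> 1 \<and> j \<noteq> k \<and> j * m \<le> s \<and> k * m \<le> s \<and> s \<le> t
      \<and> (\<forall>n \<in> {2..s}. f0 n \<in> omega n)
      \<and> e1 \<in> halfedges_at m j f0 s \<and> e2 \<in> halfedges_at m k f0 s) \<longrightarrow>
     (let EA = measure_pmf.expectation (future \<beta> s t)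
                 (\<lambda>g. real (card (blk m j s (merge_seq s f0 g) t e1)));
          EB = measure_pmf.expectation (future \<beta> s t)
                 (\<lambda>g. real (card (blk m k s (merge_seq s f0 g) t e2)));
          EAB = measure_pmf.expectation (future \<beta> s t)
                 (\<lambda>g. real (card (blk m j s (merge_seq s f0 g) t e1))
                      * real (card (blk m k s (merge_seq s f0 g) t e2)))
      in EAB \<le> EA * EB \<and> EA * EB \<le> (real t / real s) powr (2 / (2 + \<beta>)) * (1 + C / real s))"
proof -
  define c where "c = 2/(2+\<beta>)"
  define r where "r = 1/(2+\<beta>)"
  define C where "C = 2*(1+c)/(1-c)"
  show ?thesis
  proof (rule exI[of _ C], intro allI impI)
    fix m j k s t :: nat and f0 :: "nat \<Rightarrow> nat \<times> kind" and e1 e2 :: "nat \<times> side"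
    assume H: "m \<ge> 1 \<and> j \<ge> 1 \<and> k \<ge> 1 \<and> j \<noteq> k \<and> j * m \<le> s \<and> k * m \<le> s \<and> s \<le> t
      \<and> (\<forall>n \<in> {2..s}. f0 n \<in> omega n)
      \<and> e1 \<in> halfedges_at m j f0 s \<and> e2 \<in> halfedges_at m k f0 s"
    then have m1: "m \<ge> 1" and j1: "j \<ge> 1" and k1: "k \<ge> 1" and jk: "j \<noteq> k"
      and js: "j * m \<le> s" and ks: "k * m \<le> s" and st: "s \<le> t"
      and e1H: "e1 \<in> halfedges_at m j f0 s" and e2H: "e2 \<in> halfedges_at m k f0 s" by auto
    have "j \<le> j * m" "k \<le> k * m" using m1 by simp_all
    then have s2: "2 \<le> s" using js ks jk j1 k1 by linarith
    then have s1: "1 \<le> s" by simp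
    have e1: "2 \<le> fst e1" "fst e1 \<le> s" "in_grp m j (hvert f0 e1)"
      using e1H unfolding halfedges_at_def halfedges_def by auto
    have e2: "2 \<le> fst e2" "fst e2 \<le> s" "in_grp m k (hvert f0 e2)"
      using e2H unfolding halfedges_at_def halfedges_def by auto
    have ne: "e1 \<noteq> e2" using e1(3) e2(3) jk in_grp_unique by blast
    have blk1: "\<And>g. blk m j s (merge_seq s f0 g) t e1 = SS (merge_seq s f0 g) s t e1"
      by (rule blk_SS) (use halfedges_at_merge e1H st in auto)
    have blk2: "\<And>g. blk m k s (merge_seq s f0 g) t e2 = SS (merge_seq s f0 g) s t e2"
      by (rule blk_SS) (use halfedges_at_merge e2H st in auto)
    define Q1 where "Q1 = (\<Prod>n\<in>{s<..t}. 1 + 1 / Dn \<beta> n)"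
    define Q2 where "Q2 = (\<Prod>n\<in>{s<..t}. 1 + 2 / Dn \<beta> n)"
    have Q1p: "0 \<le> Q1" unfolding Q1_def using prodD_nonneg[of 1 \<beta> s t] assms s1 by simp
    have Q2p: "0 \<le> Q2" unfolding Q2_def using prodD_nonneg[of 2 \<beta> s t] assms s1 by simp
    have EA: "measure_pmf.expectation (future \<beta> s t) (\<lambda>g. real (card (blk m j s (merge_seq s f0 g) t e1))) = Q1"
      unfolding blk1 Q1_def by (rule expect_nn[OF _ E_a[OF assms s1 st e1(1,2)]]) (use Q1p[unfolded Q1_def] in auto)
    have EB: "measure_pmf.expectation (future \<beta> s t) (\<lambda>g. real (card (blk m k s (merge_seq s f0 g) t e2))) = Q1"
      unfolding blk2 Q1_def by (rule expect_nn[OF _ E_a[OF assms s1 st e2(1,2)]]) (use Q1p[unfolded Q1_def] in auto)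
    have EAB: "measure_pmf.expectation (future \<beta> s t) (\<lambda>g. real (card (blk m j s (merge_seq s f0 g) t e1))
                      * real (card (blk m k s (merge_seq s f0 g) t e2))) = Q2"
      unfolding blk1 blk2 Q2_def by (rule expect_nn[OF _ E_ab[OF assms s1 st e1(1,2) e2(1,2) ne]]) (use Q2p[unfolded Q2_def] in auto)
    have "Q2 \<le> Q1 * Q1"
    proof -
      have "Q1 * Q1 = (\<Prod>n\<in>{s<..t}. (1 + 1 / Dn \<beta> n) * (1 + 1 / Dn \<beta> n))"
        unfolding Q1_def by (simp add: prod.distrib)
      moreover have "Q2 \<le> (\<Prod>n\<in>{s<..t}. (1 + 1 / Dn \<beta> n) * (1 + 1 / Dn \<beta> n))"
        unfolding Q2_def
      proof (rule prod_mono)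
        fix n assume "n \<in> {s<..t}"
        then have D: "Dn \<beta> n > 0" using Dn_pos[of \<beta> n] assms s1 by auto
        have "(1 + 1 / Dn \<beta> n) * (1 + 1 / Dn \<beta> n) = 1 + 2 / Dn \<beta> n + (1 / Dn \<beta> n)^2"
          by (simp add: algebra_simps power2_eq_square)
        then show "0 \<le> 1 + 2 / Dn \<beta> n \<and> 1 + 2 / Dn \<beta> n \<le> (1 + 1 / Dn \<beta> n) * (1 + 1 / Dn \<beta> n)"
          using D by simp
      qed
      ultimately show ?thesis by simp
    qed
    moreover have "Q1 * Q1 \<le> (real t / real s) powr (2 / (2 + \<beta>)) * (1 + C / real s)"
      by (rule final_bound[OF assms s2 st Q1p Q1_bound[OF assms s2 st c_def r_def, folded Q1_def] c_def r_def C_def])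
    ultimately show "let EA = measure_pmf.expectation (future \<beta> s t)
                 (\<lambda>g. real (card (blk m j s (merge_seq s f0 g) t e1)));
          EB = measure_pmf.expectation (future \<beta> s t)
                 (\<lambda>g. real (card (blk m k s (merge_seq s f0 g) t e2)));
          EAB = measure_pmf.expectation (future \<beta> s t)
                 (\<lambda>g. real (card (blk m j s (merge_seq s f0 g) t e1))
                      * real (card (blk m k s (merge_seq s f0 g) t e2)))
      in EAB \<le> EA * EB \<and> EA * EB \<le> (real t / real s) powr (2 / (2 + \<beta>)) * (1 + C / real s)"
      unfolding Let_def EA EB EAB by simp
  qed
qed

end
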